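(* Let $n\ge 2$ and $1\le k\le n-1$. Suppose $F$ is absolutely continuous, $h$ is continuous on $[l_F,r_F]$, and $h^{(k)}$ is continuous on $(l_F,r_F)$. Assume that for every $v\in(l_F,r_F)$ the quantity ${}_0M_k(l_F,v)=\frac{\partial^k}{\partial v^k}\frac{h(v)-h(l_F)}{v-l_F}$ is nonzero. Then \[ E[h^{(k)}(X(n))\mid X(n-k)=u,\ X(n+1)=v]=k\,{}_0M_{k-1}(u,v)\qquad\text{for all } l_F<u<v<r_F \] holds if and only if $l_F>-\infty$, $r_F=\infty$ and $F(x)=1-e^{-c(x-l_F)}$ for $x\ge l_F$, for some constant $c>0$.
   Context: $X_1,X_2,\dots$ are i.i.d. copies of a random variable $X$ with distribution function $F$; $l_F=\inf\{x:F(x)>0\}$, $r_F=\sup\{x:F(x)<1\}$. Upper record times: $L(1)=1$, $L(m)=\min\{j>L(m-1): X_j>X_{L(m-1)}\}$; upper record values $X(m)=X_{L(m)}$. Let $R(x)=-\ln(1-F(x))$. Conditional expectations given $X(n-k)=u$, $X(n+r)=v$ ($1\le k\le n-1$, $r\ge1$, $u<v$) are taken with respect to the conditional density of $X(n)$ \[ t\mapsto \frac{(k+r-1)!}{(k-1)!(r-1)!}\Big[\tfrac{R(t)-R(u)}{R(v)-R(u)}\Big]^{k-1}\Big[\tfrac{R(v)-R(t)}{R(v)-R(u)}\Big]^{r-1}\frac{R'(t)}{R(v)-R(u)},\quad u<t<v. \] For a function $h$ set $M(u,v)=\frac{h(v)-h(u)}{v-u}$ ($u\ne v$) and ${}_iM_j(u,v)=\frac{\partial^{i+j}}{\partial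 u^i\partial v^j}M(u,v)$; ${}_iM={}_iM_0$, $M_j={}_0M_j$. *)

theory Defs
  imports "HOL-Probability.Probability"
begin

definition lF :: "(real \<Rightarrow> real) \<Rightarrow> ereal" where
  "lF F = Inf (ereal ` {x. F x > 0})"

definition rF :: "(real \<Rightarrow> real) \<Rightarrow> ereal" where
  "rF F = Sup (ereal ` {x. F x < 1})"

definition Rfun :: "(real \<Rightarrow> real) \<Rightarrow> real \<Rightarrow> real" where
  "Rfun F x = - ln (1 - F x)"

definition Mq :: "(real \<Rightarrow> real) \<Rightarrow> real \<Rightarrow> real \<Rightarrow> real" where
  "Mq h u v = (h v - h u) / (v - u)"

definition Mj :: "(real \<Rightarrow> real) \<Rightarrow> nat \<Rightarrow> real \<Rightarrow> real \<Rightarrow> real" where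
  "Mj h j u v = (deriv ^^ j) (\<lambda>w. Mq h u w) v"

(* conditional density of X(n) given X(n-k)=u, X(n+r)=v *)
definition rec_cond_density ::
  "(real \<Rightarrow> real) \<Rightarrow> nat \<Rightarrow> nat \<Rightarrow> real \<Rightarrow> real \<Rightarrow> real \<Rightarrow> real" where
  "rec_cond_density F k r u v t =
     fact (k + r - 1) / (fact (k - 1) * fact (r - 1))
     * ((Rfun F t - Rfun F u) / (Rfun F v - Rfun F u)) ^ (k - 1)
     * ((Rfun F v - Rfun F t) / (Rfun F v - Rfun F u)) ^ (r - 1)
     * deriv (Rfun F) t / (Rfun F v - Rfun F u)"

(* E[g(X(n)) | X(n-k)=u, X(n+r)=v] *)
definition rec_cond_exp ::
  "(real \<Rightarrow> real) \<Rightarrow> (real \<Rightarrow> real) \<Rightarrow> nat \<Rightarrow> nat \<Rightarrow> real \<Rightarrow> real \<Rightarrow> real" where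
  "rec_cond_exp F g k r u v = integral {u..v} (\<lambda>t. g t * rec_cond_density F k r u v t)"

end

theory Submission
  imports Defs
begin


fun mseq :: "(nat \<Rightarrow> real \<Rightarrow> real) \<Rightarrow> real \<Rightarrow> nat \<Rightarrow> real \<Rightarrow> real" where
  "mseq H u 0 w = (H 0 w - H 0 u) / (w - u)"
| "mseq H u (Suc j) w = (H (Suc j) w - real (Suc j) * mseq H u j w) / (w - u)"

lemma alg_aux: fixes d :: real assumes "d \<noteq> 0" "B - c * m0 = m1 * d"
  shows "((A - c*m1)*d - (B - c*m0)*1)/d^2 = (A - (c+1)*m1)/d"
  using assms by (simp add: field_simps power2_eq_square)

lemma mseq_deriv:
  assumes hd: "\<forall>j<k. \<forall>x\<in>S. (H j has_real_derivative H (Suc j) x) (at x)"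
    and Su: "\<forall>w\<in>S. u < w" and "j < k" and "w \<in> S"
  shows "(mseq H u j has_real_derivative mseq H u (Suc j) w) (at w)"
  using assms(3,4)
proof (induction j arbitrary: w)
  case 0
  have h1: "(H 0 has_real_derivative H 1 w) (at w)" using hd 0 by force
  have "u < w" using Su 0 by auto
  have "((\<lambda>w. (H 0 w - H 0 u) / (w - u)) has_real_derivative
         ((H 1 w) * (w - u) - (H 0 w - H 0 u) * 1) / (w - u)^2) (at w)"
    using \<open>u < w\<close> by (auto intro!: derivative_eq_intros h1 simp: power2_eq_square)
  moreover have "((H 1 w) * (w - u) - (H 0 w - H 0 u) * 1) / (w - u)^2 = mseq H u (Suc 0) w"
    using \<open>u < w\<close> by (simp add: field_simps power2_eq_square)
  ultimately show ?case by (simp add: fun_eq_iff)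
next
  case (Suc j)
  have "u < w" using Su Suc by auto
  have h1: "(H (Suc j) has_real_derivative H (Suc (Suc j)) w) (at w)"
    using hd Suc by blast
  have m1: "(mseq H u j has_real_derivative mseq H u (Suc j) w) (at w)"
    using Suc by auto
  have "((\<lambda>w. (H (Suc j) w - real (Suc j) * mseq H u j w) / (w - u)) has_real_derivative
       ((H (Suc (Suc j)) w - real (Suc j) * mseq H u (Suc j) w) * (w - u)
         - (H (Suc j) w - real (Suc j) * mseq H u j w) * 1) / (w - u)^2) (at w)"
  proof -
    have a: "((\<lambda>w. H (Suc j) w - real (Suc j) * mseq H u j w) has_real_derivative
         (H (Suc (Suc j)) w - real (Suc j) * mseq H u (Suc j) w)) (at w)"
      by (intro DERIV_diff DERIV_cmult h1 m1)
    have b: "((\<lambda>w. w - u) has_real_derivative 1) (at w)"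
      by (auto intro!: derivative_eq_intros)
    show ?thesis using DERIV_divide[OF a b] \<open>u < w\<close> by (simp add: power2_eq_square)
  qed
  moreover have "((H (Suc (Suc j)) w - real (Suc j) * mseq H u (Suc j) w) * (w - u)
         - (H (Suc j) w - real (Suc j) * mseq H u j w) * 1) / (w - u)^2
       = mseq H u (Suc (Suc j)) w"
  proof -
    have "H (Suc j) w - real (Suc j) * mseq H u j w = mseq H u (Suc j) w * (w - u)"
      using \<open>u < w\<close> by simp
    from alg_aux[OF _ this, of "H (Suc (Suc j)) w"] \<open>u < w\<close>
    show ?thesis by simp
  qed
  moreover have "mseq H u (Suc j) = (\<lambda>w. (H (Suc j) w - real (Suc j) * mseq H u j w) / (w - u))"
    by (simp add: fun_eq_iff)
  ultimately show ?case by simp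
qed

lemma Mj_eq:
  assumes hd: "\<forall>j<k. \<forall>x\<in>S. ((deriv ^^ j) h has_real_derivative (deriv ^^ Suc j) h x) (at x)"
    and S: "open S" and Su: "\<forall>w\<in>S. u < w" and "j \<le> k" and "w \<in> S"
  shows "Mj h j u w = mseq (\<lambda>j. (deriv ^^ j) h) u j w"
  using assms(4,5)
proof (induction j arbitrary: w)
  case 0
  then show ?case by (simp add: Mj_def Mq_def)
next
  case (Suc j)
  have hd': "\<forall>j<k. \<forall>x\<in>S. ((\<lambda>j. (deriv ^^ j) h) j has_real_derivative (\<lambda>j. (deriv ^^ j) h) (Suc j) x) (at x)"
    using hd by simp
  have d: "(mseq (\<lambda>j. (deriv ^^ j) h) u j has_real_derivative mseq (\<lambda>j. (deriv ^^ j) h) u (Suc j) w) (at w)"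
    using mseq_deriv[OF hd' Su, of j w] Suc by simp
  have "((deriv ^^ j) (\<lambda>w. Mq h u w) has_real_derivative mseq (\<lambda>j. (deriv ^^ j) h) u (Suc j) w) (at w)"
    by (rule has_field_derivative_transform_within_open[OF d S \<open>w \<in> S\<close>])
       (use Suc.IH Suc.prems in \<open>auto simp: Mj_def\<close>)
  then have "deriv ((deriv ^^ j) (\<lambda>w. Mq h u w)) w = mseq (\<lambda>j. (deriv ^^ j) h) u (Suc j) w"
    by (rule DERIV_imp_deriv)
  then show ?case unfolding Mj_def by simp
qed

lemma mseq_cont_u:
  assumes h0: "(H 0 \<longlongrightarrow> H 0 l) (at_right l)" and "v \<noteq> l"
  shows "((\<lambda>u. mseq H u j v) \<longlongrightarrow> mseq H l j v) (at_right l)"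
proof (induction j)
  case 0
  show ?case using \<open>v \<noteq> l\<close> by (auto intro!: tendsto_intros h0)
next
  case (Suc j)
  show ?case using \<open>v \<noteq> l\<close> by (auto intro!: tendsto_intros Suc)
qed

lemma mseq_phi0:
  assumes "\<And>i. i \<le> j \<Longrightarrow> (H i \<longlongrightarrow> H i u) (at_right u)"
  shows "((\<lambda>w. (w - u) ^ Suc j * mseq H u j w) \<longlongrightarrow> 0) (at_right u)"
  using assms
proof (induction j)
  case 0
  have "((\<lambda>w. H 0 w - H 0 u) \<longlongrightarrow> 0) (at_right u)"
    using tendsto_diff[OF 0[of 0] tendsto_const[of "H 0 u"]] by simp
  moreover have "\<forall>\<^sub>F w in at_right u. H 0 w - H 0 u = (w - u) ^ Suc 0 * mseq H u 0 w"
    by (rule eventually_mono[OF eventually_at_right_less[of u]]) simp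
  ultimately show ?case by (auto intro: Lim_transform_eventually)
next
  case (Suc j)
  have IH: "((\<lambda>w. (w - u) ^ Suc j * mseq H u j w) \<longlongrightarrow> 0) (at_right u)"
    using Suc by auto
  have t1: "((\<lambda>w. w - u) \<longlongrightarrow> 0) (at_right u)"
  proof -
    have "((\<lambda>w. w - u) \<longlongrightarrow> u - u) (at_right u)"
      by (intro tendsto_intros tendsto_ident_at)
    then show ?thesis by simp
  qed
  have t2: "(H (Suc j) \<longlongrightarrow> H (Suc j) u) (at_right u)" using Suc.prems by auto
  have "((\<lambda>w. (w - u) ^ Suc j * H (Suc j) w - real (Suc j) * ((w - u) ^ Suc j * mseq H u j w))
     \<longlongrightarrow> 0 ^ Suc j * H (Suc j) u - real (Suc j) * 0) (at_right u)"
    by (intro tendsto_intros t1 t2 IH)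
  then have "((\<lambda>w. (w - u) ^ Suc j * H (Suc j) w - real (Suc j) * ((w - u) ^ Suc j * mseq H u j w))
     \<longlongrightarrow> 0) (at_right u)" by simp
  moreover have "\<forall>\<^sub>F w in at_right u. (w - u) ^ Suc j * H (Suc j) w - real (Suc j) * ((w - u) ^ Suc j * mseq H u j w)
       = (w - u) ^ Suc (Suc j) * mseq H u (Suc j) w"
  proof (rule eventually_mono[OF eventually_at_right_less[of u]])
    fix w assume "u < w"
    then show "(w - u) ^ Suc j * H (Suc j) w - real (Suc j) * ((w - u) ^ Suc j * mseq H u j w)
       = (w - u) ^ Suc (Suc j) * mseq H u (Suc j) w"
      by (simp add: field_simps)
  qed
  ultimately show ?case by (auto intro: Lim_transform_eventually)
qed

lemma int_identity:
  fixes H :: "nat \<Rightarrow> real \<Rightarrow> real"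
  assumes k1: "1 \<le> k" and hd: "\<forall>j<k. \<forall>x\<in>S. (H j has_real_derivative H (Suc j) x) (at x)"
    and S: "open S" and sub: "{u..v} \<subseteq> S" and uv: "u < v" and Hk: "continuous_on S (H k)"
  shows "((\<lambda>t. H k t * (t - u) ^ (k - 1)) has_integral (v - u) ^ k * mseq H u (k - 1) v) {u..v}"
proof -
  define S' where "S' = S \<inter> {u<..}"
  have S': "open S'" using S by (simp add: S'_def open_Int)
  have Su: "\<forall>w\<in>S'. u < w" by (simp add: S'_def)
  have hd': "\<forall>j<k. \<forall>x\<in>S'. (H j has_real_derivative H (Suc j) x) (at x)"
    using hd by (simp add: S'_def)
  define \<Psi> where "\<Psi> = (\<lambda>w. (w - u) ^ k * mseq H u (k - 1) w)"
  have \<Psi>u: "\<Psi> u = 0" using k1 by (simp add: \<Psi>_def)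
  have km: "k = Suc (k - 1)" using k1 by simp
  have dm: "(mseq H u (k - 1) has_real_derivative mseq H u k w) (at w)" if "w \<in> S'" for w
    using mseq_deriv[OF hd' Su, of "k - 1" w] that k1 km by simp
  have cont: "continuous_on {u..v} \<Psi>"
  proof (rule continuous_on_eq_continuous_within[THEN iffD2], intro ballI)
    fix w assume w: "w \<in> {u..v}"
    show "continuous (at w within {u..v}) \<Psi>"
    proof (cases "w = u")
      case True
      have lim: "(H i \<longlongrightarrow> H i u) (at_right u)" if "i \<le> k - 1" for i
      proof -
        have "u \<in> S" using sub uv by auto
        have "i < k" using that k1 by simp
        then have "isCont (H i) u" using hd \<open>u \<in> S\<close> DERIV_isCont by blast
        then show ?thesis by (simp add: filterlim_at_split isCont_def)
      qed
      have "(\<Psi> \<longlongrightarrow> 0) (at_right u)"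
        using mseq_phi0[of "k - 1" H u, OF lim] km unfolding \<Psi>_def by simp
      then show ?thesis using True uv \<Psi>u
        by (simp add: continuous_within at_within_Icc_at_right)
    next
      case False
      then have "w \<in> S'" using w sub by (auto simp: S'_def)
      then have "isCont (mseq H u (k - 1)) w" using dm DERIV_isCont by blast
      then have "isCont \<Psi> w" unfolding \<Psi>_def by (intro continuous_intros)
      then show ?thesis by (rule continuous_at_imp_continuous_within)
    qed
  qed
  have der: "(\<Psi> has_vector_derivative H k w * (w - u) ^ (k - 1)) (at w)" if w: "w \<in> {u<..<v}" for w
  proof -
    have "w \<in> S'" using w sub by (auto simp: S'_def)
    have p: "((\<lambda>w. (w - u) ^ k) has_real_derivative real k * (w - u) ^ (k - 1) * 1) (at w)"
      using DERIV_power[OF DERIV_diff[OF DERIV_ident DERIV_const], where n=k] by simp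
    have "(\<Psi> has_real_derivative
        (real k * (w - u) ^ (k - 1) * 1) * mseq H u (k - 1) w + mseq H u k w * (w - u) ^ k) (at w)"
      unfolding \<Psi>_def
      by (rule DERIV_mult[OF p dm[OF \<open>w \<in> S'\<close>]])
    moreover have "(real k * (w - u) ^ (k - 1) * 1) * mseq H u (k - 1) w + mseq H u k w * (w - u) ^ k
        = H k w * (w - u) ^ (k - 1)"
    proof -
      have wu: "w - u \<noteq> 0" using w by simp
      have "mseq H u k w = (H k w - real k * mseq H u (k - 1) w) / (w - u)"
        using k1 by (cases k) auto
      then have e1: "mseq H u k w * (w - u) = H k w - real k * mseq H u (k - 1) w"
        using wu by simp
      have e2: "(w - u) ^ k = (w - u) ^ (k - 1) * (w - u)"
        by (subst km) simp
      have "(real k * (w - u) ^ (k - 1) * 1) * mseq H u (k - 1) w + mseq H u k w * (w - u) ^ k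
          = (w - u) ^ (k - 1) * (real k * mseq H u (k - 1) w + mseq H u k w * (w - u))"
        unfolding e2 by (simp add: algebra_simps)
      also have "\<dots> = H k w * (w - u) ^ (k - 1)" unfolding e1 by simp
      finally show ?thesis .
    qed
    ultimately show ?thesis by (simp add: has_real_derivative_iff_has_vector_derivative)
  qed
  have "((\<lambda>t. H k t * (t - u) ^ (k - 1)) has_integral (\<Psi> v - \<Psi> u)) {u..v}"
    by (rule fundamental_theorem_of_calculus_interior[OF _ cont der]) (use uv in auto)
  then show ?thesis using \<Psi>u by (simp only: \<Psi>_def diff_zero)
qed



lemma cdf_density:
  assumes RD: "real_distribution M" and AC: "absolutely_continuous lborel M"
  obtains g where "\<And>x. g x \<ge> 0"
    "\<And>a b. a \<le> b \<Longrightarrow> (g has_integral (cdf M b - cdf M a)) {a..b}"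
proof -
  interpret real_distribution M by (rule RD)
  have sf: "sigma_finite_measure (lborel::real measure)" by (rule sigma_finite_lborel)
  have "sets M = sets lborel" by simp
  from sigma_finite_measure.Radon_Nikodym[OF sf AC this]
  obtain f where fm: "f \<in> borel_measurable lborel" and fM: "density lborel f = M" by blast
  have em: "emeasure M A = (\<integral>\<^sup>+x. f x * indicator A x \<partial>lborel)" if "A \<in> sets borel" for A
    using that fM[symmetric] fm by (simp add: emeasure_density)
  have "(\<integral>\<^sup>+x. f x \<partial>lborel) = emeasure M UNIV"
    using em[of UNIV] by simp
  also have "\<dots> \<noteq> \<infinity>" using emeasure_finite[of UNIV] by simp
  finally have "AE x in lborel. f x \<noteq> \<infinity>" by (intro nn_integral_PInf_AE fm)
  then have ae: "AE x in lborel. ennreal (enn2real (f x)) = f x"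
    by eventually_elim (simp add: less_top)
  define g where "g x = enn2real (f x)" for x
  have gm: "g \<in> borel_measurable borel" unfolding g_def using fm by simp
  have hi: "(g has_integral measure M {a..b}) {a..b}" for a b
  proof -
    have "(\<integral>\<^sup>+x. ennreal (g x * indicator {a..b} x) \<partial>lborel) = (\<integral>\<^sup>+x. f x * indicator {a..b} x \<partial>lborel)"
      by (rule nn_integral_cong_AE) (use ae in \<open>eventually_elim, auto simp: g_def indicator_def\<close>)
    also have "\<dots> = emeasure M {a..b}" by (rule em[symmetric]) simp
    also have "\<dots> = ennreal (measure M {a..b})" by (simp add: emeasure_eq_measure)
    finally have eq: "(\<integral>\<^sup>+x. ennreal (g x * indicator {a..b} x) \<partial>lborel) = ennreal (measure M {a..b})" .
    have hU: "((\<lambda>x. g x * indicator {a..b} x) has_integral measure M {a..b}) UNIV"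
    proof (rule nn_integral_has_integral[OF _ _ eq])
      show "(\<lambda>x. g x * indicator {a..b} x) \<in> borel_measurable borel" using gm by measurable
    qed (auto simp: g_def)
    have "((\<lambda>x. if x \<in> {a..b} then g x else 0) has_integral measure M {a..b}) UNIV"
    proof -
      have "(\<lambda>x. g x * indicator {a..b} x) = (\<lambda>x. if x \<in> {a..b} then g x else 0)"
        by (auto simp: indicator_def)
      with hU show ?thesis by simp
    qed
    then show ?thesis using has_integral_restrict_UNIV[of "{a..b}" g] by blast
  qed
  have pt: "measure M {x} = 0" for x
  proof -
    have "{x} \<in> null_sets lborel" using countable_imp_null_set_lborel[of "{x}"] by simp
    then have "{x} \<in> null_sets M" using AC unfolding absolutely_continuous_def by blast
    then show ?thesis by (simp add: measure_def null_sets_def)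
  qed
  have cd: "measure M {a..b} = cdf M b - cdf M a" if "a \<le> b" for a b
  proof (cases "a = b")
    case True then show ?thesis using pt by simp
  next
    case False
    then have "a < b" using that by simp
    have "{a..b} = {a} \<union> {a<..b}" using \<open>a < b\<close> by auto
    moreover have "measure M ({a} \<union> {a<..b}) = measure M {a} + measure M {a<..b}"
      by (rule finite_measure_Union) auto
    ultimately have "measure M {a..b} = measure M {a} + measure M {a<..b}" by simp
    then show ?thesis using pt cdf_diff_eq[OF \<open>a < b\<close>] by simp
  qed
  show ?thesis
  proof (rule that[of g])
    show "\<And>x. g x \<ge> 0" by (simp add: g_def)
  next
    fix a b :: real assume ab: "a \<le> b"
    show "(g has_integral (cdf M b - cdf M a)) {a..b}" using hi[of a b] cd[OF ab] by simp
  qed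
qed



lemma leb:
  fixes g :: "real \<Rightarrow> real"
  assumes gi: "\<And>a b. g integrable_on {a..b}"
  obtains N where "negligible N"
    "\<And>x a. x \<notin> N \<Longrightarrow> a < x \<Longrightarrow> ((\<lambda>y. integral {a..y} g) has_real_derivative g x) (at x)"
proof -
  have gi1: "\<And>a b::real. g integrable_on cbox a b" using gi by simp
  obtain N1 where N1: "negligible N1"
    "\<And>x e. \<lbrakk>x \<notin> N1; 0 < e\<rbrakk> \<Longrightarrow> \<exists>d>0. \<forall>h. 0 < h \<and> h < d \<longrightarrow>
          norm (integral (cbox x (x + h *\<^sub>R One)) g /\<^sub>R h ^ DIM(real) - g x) < e"
    using integrable_ccontinuous_explicit[OF gi1] by blast
  have gi2: "\<And>a b::real. (\<lambda>x. g (- x)) integrable_on cbox a b"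
  proof -
    fix a b :: real
    have "(\<lambda>x. g (- x)) integrable_on cbox (- (- a)) (- (- b))"
      using integrable_reflect[of g "-a" "-b"] gi1 by blast
    then show "(\<lambda>x. g (- x)) integrable_on cbox a b" by simp
  qed
  obtain N2 where N2: "negligible N2"
    "\<And>x e. \<lbrakk>x \<notin> N2; 0 < e\<rbrakk> \<Longrightarrow> \<exists>d>0. \<forall>h. 0 < h \<and> h < d \<longrightarrow>
          norm (integral (cbox x (x + h *\<^sub>R One)) (\<lambda>x. g (- x)) /\<^sub>R h ^ DIM(real) - g (- x)) < e"
    using integrable_ccontinuous_explicit[OF gi2] by blast
  define N where "N = N1 \<union> uminus ` N2"
  have negN: "negligible N"
    unfolding N_def
    by (intro negligible_Un N1 negligible_differentiable_image_negligible N2)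
       (auto intro!: derivative_intros simp: differentiable_on_def)
  show ?thesis
  proof (rule that[OF negN])
    fix x a :: real assume xN: "x \<notin> N" and ax: "a < x"
    have x1: "x \<notin> N1" and x2: "- x \<notin> N2" using xN by (auto simp: N_def image_iff)
    show "((\<lambda>y. integral {a..y} g) has_real_derivative g x) (at x)"
      unfolding has_field_derivative_iff
    proof (rule LIM_I)
      fix e :: real assume e: "0 < e"
      obtain d1 where d1: "d1 > 0" "\<And>h. 0 < h \<Longrightarrow> h < d1 \<Longrightarrow> \<bar>integral {x..x+h} g / h - g x\<bar> < e"
        using N1(2)[OF x1 e] by (auto simp: divide_inverse_commute)
      obtain d2 where d2: "d2 > 0" "\<And>h. 0 < h \<Longrightarrow> h < d2 \<Longrightarrow> \<bar>integral {-x..-x+h} (\<lambda>x. g (- x)) / h - g x\<bar> < e"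
        using N2(2)[OF x2 e] by (auto simp: divide_inverse_commute)
      show "\<exists>s>0. \<forall>y. y \<noteq> x \<and> norm (y - x) < s \<longrightarrow>
          norm ((integral {a..y} g - integral {a..x} g) / (y - x) - g x) < e"
      proof (intro exI[of _ "min (min d1 d2) (x - a)"] conjI allI impI)
        show "0 < min (min d1 d2) (x - a)" using d1 d2 ax by simp
        fix y assume y: "y \<noteq> x \<and> norm (y - x) < min (min d1 d2) (x - a)"
        show "norm ((integral {a..y} g - integral {a..x} g) / (y - x) - g x) < e"
        proof (cases "x < y")
          case True
          have "integral {a..x} g + integral {x..y} g = integral {a..y} g"
            by (rule Henstock_Kurzweil_Integration.integral_combine) (use True ax gi in auto)
          then have "(integral {a..y} g - integral {a..x} g) / (y - x) = integral {x..x + (y - x)} g / (y - x)"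
            by simp
          moreover have "\<bar>integral {x..x + (y - x)} g / (y - x) - g x\<bar> < e"
            using True y by (intro d1(2)) auto
          ultimately show ?thesis using True by auto
        next
          case False
          then have yx: "y < x" using y by simp
          have ay: "a < y" using y yx by auto
          have "integral {a..y} g + integral {y..x} g = integral {a..x} g"
            by (rule Henstock_Kurzweil_Integration.integral_combine) (use yx ay gi in auto)
          moreover have "integral {-x..-x + (x - y)} (\<lambda>x. g (- x)) = integral {y..x} g"
            using integral_reflect_real[of y x g] by simp
          ultimately have "integral {a..y} g - integral {a..x} g = - integral {-x..-x + (x - y)} (\<lambda>x. g (- x))"
            by simp
          then have "(integral {a..y} g - integral {a..x} g) / (y - x) = integral {-x..-x + (x - y)} (\<lambda>x. g (- x)) / (x - y)"
            by (metis divide_minus_left divide_minus_right minus_diff_eq)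
          moreover have "\<bar>integral {-x..-x + (x - y)} (\<lambda>x. g (- x)) / (x - y) - g x\<bar> < e"
            using yx y by (intro d2(2)) auto
          ultimately show ?thesis by simp
        qed
      qed
    qed
  qed
qed



lemma cdf_isCont:
  assumes RD: "real_distribution M" and AC: "absolutely_continuous lborel M"
  shows "isCont (cdf M) x"
proof -
  interpret real_distribution M by (rule RD)
  have "{x} \<in> null_sets lborel" using countable_imp_null_set_lborel[of "{x}"] by simp
  then have "{x} \<in> null_sets M" using AC unfolding absolutely_continuous_def by blast
  then have "measure M {x} = 0" by (simp add: measure_def null_sets_def)
  then show ?thesis by (simp add: isCont_cdf)
qed

lemma cdf_pos_right:
  assumes RD: "real_distribution M" and "lF (cdf M) < ereal x"
  shows "cdf M x > 0"
proof -
  interpret real_distribution M by (rule RD)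
  from assms(2) obtain y where "y \<in> ereal ` {x. cdf M x > 0}" "y < ereal x"
    unfolding lF_def Inf_less_iff by blast
  then obtain z where "cdf M z > 0" "z < x" by auto
  then show ?thesis using cdf_nondecreasing[of z x] by simp
qed

lemma cdf_zero_left:
  assumes RD: "real_distribution M" and "ereal x < lF (cdf M)"
  shows "cdf M x = 0"
proof -
  interpret real_distribution M by (rule RD)
  have "\<not> cdf M x > 0"
  proof
    assume "cdf M x > 0"
    then have "lF (cdf M) \<le> ereal x" unfolding lF_def by (intro Inf_lower) auto
    then show False using assms(2) by simp
  qed
  then show ?thesis using cdf_nonneg[of x] by simp
qed

lemma cdf_lt1:
  assumes RD: "real_distribution M" and "ereal x < rF (cdf M)"
  shows "cdf M x < 1"
proof -
  interpret real_distribution M by (rule RD)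
  from assms(2) obtain y where "y \<in> ereal ` {x. cdf M x < 1}" "ereal x < y"
    unfolding rF_def less_Sup_iff by blast
  then obtain z where "cdf M z < 1" "x < z" by auto
  then show ?thesis using cdf_nondecreasing[of x z] by simp
qed

lemma cdf_one_right:
  assumes RD: "real_distribution M" and "rF (cdf M) < ereal x"
  shows "cdf M x = 1"
proof -
  interpret real_distribution M by (rule RD)
  have "\<not> cdf M x < 1"
  proof
    assume "cdf M x < 1"
    then have "ereal x \<le> rF (cdf M)" unfolding rF_def by (intro Sup_upper) auto
    then show False using assms(2) by simp
  qed
  then show ?thesis using cdf_bounded_prob[of x] by simp
qed

lemma cdf_at_l:
  assumes RD: "real_distribution M" and AC: "absolutely_continuous lborel M"
    and "lF (cdf M) = ereal l"
  shows "cdf M l = 0"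
proof -
  have "(cdf M \<longlongrightarrow> cdf M l) (at_left l)"
    using cdf_isCont[OF RD AC, of l] by (simp add: isCont_def filterlim_at_split)
  moreover have "\<forall>\<^sub>F y in at_left l. cdf M y = 0"
    by (rule eventually_mono[OF eventually_at_left_real[where b="l - 1"]]) (use assms(3) cdf_zero_left[OF RD] in auto)
  ultimately have "((\<lambda>y. 0) \<longlongrightarrow> cdf M l) (at_left l)"
    by (rule Lim_transform_eventually)
  then show ?thesis using tendsto_unique[OF trivial_limit_at_left_real tendsto_const] by metis
qed

lemma cdf_at_r:
  assumes RD: "real_distribution M" and AC: "absolutely_continuous lborel M"
    and "rF (cdf M) = ereal r"
  shows "cdf M r = 1"
proof -
  have "(cdf M \<longlongrightarrow> cdf M r) (at_right r)"
    using cdf_isCont[OF RD AC, of r] by (simp add: isCont_def filterlim_at_split)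
  moreover have "\<forall>\<^sub>F y in at_right r. cdf M y = 1"
    by (rule eventually_mono[OF eventually_at_right_less[of r]])
       (use assms(3) cdf_one_right[OF RD] in auto)
  ultimately have "((\<lambda>y. 1) \<longlongrightarrow> cdf M r) (at_right r)"
    by (rule Lim_transform_eventually)
  then show ?thesis using tendsto_unique[OF trivial_limit_at_right_real tendsto_const] by metis
qed

lemma lF_lt_rF:
  assumes RD: "real_distribution M" and AC: "absolutely_continuous lborel M"
  obtains x0 x1 where "x0 < x1" "lF (cdf M) \<le> ereal x0" "ereal x1 \<le> rF (cdf M)"
proof -
  interpret real_distribution M by (rule RD)
  have "\<forall>\<^sub>F y in at_bot. cdf M y < 1/2"
    using cdf_lim_at_bot by (rule order_tendstoD) simp
  then obtain N where N: "\<And>y. y \<le> N \<Longrightarrow> cdf M y < 1/2" by (auto simp: eventually_at_bot_linorder)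
  have "\<forall>\<^sub>F y in at_top. cdf M y > 3/4"
    using cdf_lim_at_top_prob by (rule order_tendstoD) simp
  then obtain N' where N': "\<And>y. y \<ge> N' \<Longrightarrow> cdf M y > 3/4" by (auto simp: eventually_at_top_linorder)
  define a where "a = min N (N' - 1)"
  have a: "cdf M a < 1/2" "a \<le> N'" using N by (auto simp: a_def)
  have b: "cdf M N' > 3/4" using N' by simp
  have co: "continuous_on {a..N'} (cdf M)"
    using cdf_isCont[OF RD AC] by (simp add: continuous_at_imp_continuous_on)
  obtain x0 where x0: "cdf M x0 = 1/2" using IVT'[of "cdf M" a "1/2" N', OF _ _ _ co] a b by auto
  obtain x1 where x1: "cdf M x1 = 3/4" using IVT'[of "cdf M" a "3/4" N', OF _ _ _ co] a b by auto
  have "x0 < x1"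
  proof (rule ccontr)
    assume "\<not> x0 < x1"
    then have "cdf M x1 \<le> cdf M x0" by (intro cdf_nondecreasing) simp
    then show False using x0 x1 by simp
  qed
  moreover have "lF (cdf M) \<le> ereal x0" unfolding lF_def by (intro Inf_lower) (use x0 in auto)
  moreover have "ereal x1 \<le> rF (cdf M)" unfolding rF_def by (intro Sup_upper) (use x1 in auto)
  ultimately show ?thesis by (rule that)
qed



context
  fixes M :: "real measure" and h :: "real \<Rightarrow> real" and n k :: nat
  assumes RD: "real_distribution M"
    and AC: "absolutely_continuous lborel M"
    and k1: "1 \<le> k"
    and hc: "continuous_on {x. lF (cdf M) \<le> ereal x \<and> ereal x \<le> rF (cdf M)} h"
    and hd0: "\<forall>j<k. \<forall>x. lF (cdf M) < ereal x \<and> ereal x < rF (cdf M) \<longrightarrow>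
            ((deriv ^^ j) h has_real_derivative (deriv ^^ Suc j) h x) (at x)"
    and hkc: "continuous_on {x. lF (cdf M) < ereal x \<and> ereal x < rF (cdf M)} ((deriv ^^ k) h)"
    and nz: "\<forall>v. lF (cdf M) < ereal v \<and> ereal v < rF (cdf M) \<longrightarrow>
            lF (cdf M) \<noteq> -\<infinity> \<and> Mj h k (real_of_ereal (lF (cdf M))) v \<noteq> 0"
begin

abbreviation "F \<equiv> cdf M"
abbreviation "H \<equiv> (\<lambda>j. (deriv ^^ j) h)"
abbreviation "I \<equiv> {x. lF (cdf M) < ereal x \<and> ereal x < rF (cdf M)}"

lemma lF_finite: "\<exists>l. lF F = ereal l"
proof -
  obtain x0 x1 where x: "x0 < x1" "lF F \<le> ereal x0" "ereal x1 \<le> rF F"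
    using lF_lt_rF[OF RD AC] by blast
  define v where "v = (x0 + x1) / 2"
  have a: "ereal x0 < ereal v" "ereal v < ereal x1" using x by (auto simp: v_def)
  have b: "lF F < ereal v" using x(2) a(1) by (rule le_less_trans)
  have c: "ereal v < rF F" using a(2) x(3) by (rule less_le_trans)
  have "lF F \<noteq> -\<infinity>" using nz b c by blast
  moreover have "lF F \<noteq> \<infinity>" using x(2) by auto
  ultimately show ?thesis by (cases "lF F") auto
qed

definition l where "l = real_of_ereal (lF F)"

lemma lF_eq: "lF F = ereal l"
  using lF_finite by (auto simp: l_def)

lemma I_eq: "I = {x. l < x \<and> ereal x < rF F}"
  by (simp add: lF_eq)

lemma open_I: "open I"
proof -
  have "open {x. ereal x < rF F}"
  proof (cases "rF F")
    case (real r) then show ?thesis by (simp add: open_Collect_less)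
  next
    case PInf then show ?thesis by simp
  next
    case MInf then show ?thesis by simp
  qed
  moreover have "open {x. l < x}" by (simp add: open_Collect_less)
  ultimately have "open ({x. l < x} \<inter> {x. ereal x < rF F})" by (intro open_Int)
  then show ?thesis by (simp add: I_eq Collect_conj_eq)
qed

lemma convex_I: "convex I"
  unfolding is_interval_convex_1[symmetric] is_interval_1 I_eq
proof (intro ballI allI impI)
  fix a b x :: real
  assume a: "a \<in> {x. l < x \<and> ereal x < rF F}" and b: "b \<in> {x. l < x \<and> ereal x < rF F}"
    and x: "a \<le> x \<and> x \<le> b"
  have "l < x" using a x by simp
  moreover
  have "ereal x \<le> ereal b" using x by simp
  then have "ereal x < rF F" using b by (blast intro: le_less_trans)
  ultimately show "x \<in> {x. l < x \<and> ereal x < rF F}" by simp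
qed

lemma hd: "\<forall>j<k. \<forall>x\<in>I. (H j has_real_derivative H (Suc j) x) (at x)"
  using hd0 by auto

lemma hd_sub: "S \<subseteq> I \<Longrightarrow> \<forall>j<k. \<forall>x\<in>S. (H j has_real_derivative H (Suc j) x) (at x)"
  using hd by blast

lemma Mj_eq_I:
  assumes "l \<le> u" "u < w" "ereal w < rF F" "j \<le> k"
  shows "Mj h j u w = mseq H u j w"
proof -
  define S where "S = {x. u < x \<and> ereal x < rF F}"
  have "S \<subseteq> I" using assms by (auto simp: S_def I_eq)
  moreover have "S = I \<inter> {u<..}" using assms by (auto simp: S_def I_eq)
  then have "open S" using open_I by (simp add: open_Int)
  ultimately show ?thesis
  proof -
    have Su: "\<forall>w\<in>S. u < w" by (simp add: S_def)
    have "w \<in> S" using assms by (simp add: S_def)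
    show ?thesis by (rule Mj_eq[OF hd_sub[OF \<open>S \<subseteq> I\<close>] \<open>open S\<close> Su \<open>j \<le> k\<close> \<open>w \<in> S\<close>])
  qed
qed

lemma F_pos: "l < x \<Longrightarrow> F x > 0"
  using cdf_pos_right[OF RD] lF_eq by simp

lemma F_lt1: "x \<in> I \<Longrightarrow> F x < 1"
  using cdf_lt1[OF RD] by simp

lemma F_l: "F l = 0"
  using cdf_at_l[OF RD AC lF_eq] .

lemma F_cont: "isCont F x"
  using cdf_isCont[OF RD AC] .

lemma back_dir:
  assumes rinf: "rF F = \<infinity>" and c: "c > 0"
    and Fexp: "\<forall>x. ereal x \<ge> lF F \<longrightarrow> F x = 1 - exp (- c * (x - l))"
    and uv: "lF F < ereal u" "u < v" "ereal v < rF F"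
  shows "rec_cond_exp F (H k) k 1 u v = real k * Mj h (k - 1) u v"
proof -
  have lu: "l < u" using uv lF_eq by simp
  have R: "Rfun F t = c * (t - l)" if "l < t" for t
    using Fexp[rule_format, of t] that lF_eq by (simp add: Rfun_def)
  have dR: "deriv (Rfun F) t = c" if "l < t" for t
  proof -
    have "((\<lambda>t. c * (t - l)) has_real_derivative c * (1 - 0)) (at t)"
      by (intro DERIV_cmult DERIV_diff DERIV_ident DERIV_const)
    then have "((\<lambda>t. c * (t - l)) has_real_derivative c) (at t)" by simp
    then have "(Rfun F has_real_derivative c) (at t)"
      by (rule has_field_derivative_transform_within_open[where S="{l<..}"]) (use that R in auto)
    then show ?thesis by (rule DERIV_imp_deriv)
  qed
  have dens: "H k t * rec_cond_density F k 1 u v t = real k / (v - u) ^ k * (H k t * (t - u) ^ (k - 1))"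
    if "t \<in> {u..v}" for t
  proof -
    have lt: "l < t" using that lu by auto
    have fk: "fact k / (fact (k - 1) * fact (1 - 1)) = (real k :: real)"
      using k1 by (cases k) (auto simp: field_simps)
    have fk': "(fact k :: real) = real k * fact (k - 1)"
      using k1 by (cases k) auto
    have lv: "l < v" using lu uv by simp
    have ne: "c * (v - l) - c * (u - l) = c * (v - u)" by (simp add: algebra_simps)
    have ne2: "c * (t - l) - c * (u - l) = c * (t - u)" by (simp add: algebra_simps)
    have "(Rfun F t - Rfun F u) / (Rfun F v - Rfun F u) = (t - u) / (v - u)"
      unfolding R[OF lt] R[OF lu] R[OF lv] ne ne2 using c by simp
    moreover have "deriv (Rfun F) t / (Rfun F v - Rfun F u) = 1 / (v - u)"
      unfolding dR[OF lt] R[OF lu] R[OF lv] ne using c by simp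
    ultimately have "rec_cond_density F k 1 u v t = real k * ((t - u) / (v - u)) ^ (k - 1) * (1 / (v - u))"
    proof -
      have "rec_cond_density F k 1 u v t = fact (k + 1 - 1) / (fact (k - 1) * fact (1 - 1))
          * ((Rfun F t - Rfun F u) / (Rfun F v - Rfun F u)) ^ (k - 1)
          * (deriv (Rfun F) t / (Rfun F v - Rfun F u))"
        unfolding rec_cond_density_def by simp
      then show ?thesis using fk' \<open>(Rfun F t - Rfun F u) / (Rfun F v - Rfun F u) = (t - u) / (v - u)\<close>
          \<open>deriv (Rfun F) t / (Rfun F v - Rfun F u) = 1 / (v - u)\<close> by (simp add: mult.assoc)
    qed
    also have "\<dots> = real k / (v - u) ^ k * (t - u) ^ (k - 1)"
    proof -
      have "(v - u) ^ k = (v - u) ^ (k - 1) * (v - u)" using k1 by (cases k) auto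
      then show ?thesis using uv by (simp add: power_divide field_simps)
    qed
    finally show ?thesis by simp
  qed
  have "rec_cond_exp F (H k) k 1 u v = integral {u..v} (\<lambda>t. real k / (v - u) ^ k * (H k t * (t - u) ^ (k - 1)))"
    unfolding rec_cond_exp_def by (rule integral_cong) (use dens in simp)
  also have "\<dots> = real k / (v - u) ^ k * integral {u..v} (\<lambda>t. H k t * (t - u) ^ (k - 1))"
    by simp
  also have "integral {u..v} (\<lambda>t. H k t * (t - u) ^ (k - 1)) = (v - u) ^ k * mseq H u (k - 1) v"
  proof (rule integral_unique, rule int_identity[OF k1 hd open_I])
    show "{u..v} \<subseteq> I" using lu uv rinf lF_eq by auto
    show "continuous_on I (H k)" using hkc by simp
  qed (use uv in auto)
  also have "mseq H u (k - 1) v = Mj h (k - 1) u v"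
    using Mj_eq_I[of u v "k - 1"] lu uv by simp
  finally show ?thesis using uv by simp
qed


definition gd where "gd = (SOME g. (\<forall>x. g x \<ge> 0) \<and> (\<forall>a b. a \<le> b \<longrightarrow> (g has_integral (F b - F a)) {a..b}))"

lemma gd_props: "\<forall>x. gd x \<ge> 0" "\<forall>a b. a \<le> b \<longrightarrow> (gd has_integral (F b - F a)) {a..b}"
proof -
  obtain g where "\<And>x. g x \<ge> 0" "\<And>a b. a \<le> b \<Longrightarrow> (g has_integral (F b - F a)) {a..b}"
    using cdf_density[OF RD AC] by blast
  then have "\<exists>g. (\<forall>x. g x \<ge> 0) \<and> (\<forall>a b. a \<le> b \<longrightarrow> (g has_integral (F b - F a)) {a..b})" by blast
  from someI_ex[OF this] show "\<forall>x. gd x \<ge> 0" "\<forall>a b. a \<le> b \<longrightarrow> (gd has_integral (F b - F a)) {a..b}"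
    unfolding gd_def by blast+
qed

lemma gd_nonneg: "gd x \<ge> 0" using gd_props by blast

lemma gd_int: "a \<le> b \<Longrightarrow> (gd has_integral (F b - F a)) {a..b}" using gd_props by blast

lemma gd_integrable: "gd integrable_on {a..b}"
proof (cases "a \<le> b")
  case True then show ?thesis using gd_int by blast
next
  case False then have "{a..b} = {}" by simp
  then show ?thesis by (simp add: integrable_on_empty)
qed

definition N0 where "N0 = (SOME N. negligible N \<and> (\<forall>x a. x \<notin> N \<longrightarrow> a < x \<longrightarrow>
    ((\<lambda>y. integral {a..y} gd) has_real_derivative gd x) (at x)))"

lemma N0_props: "negligible N0" "\<And>x a. x \<notin> N0 \<Longrightarrow> a < x \<Longrightarrow>
    ((\<lambda>y. integral {a..y} gd) has_real_derivative gd x) (at x)"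
proof -
  obtain N where "negligible N" "\<And>x a. x \<notin> N \<Longrightarrow> a < x \<Longrightarrow>
    ((\<lambda>y. integral {a..y} gd) has_real_derivative gd x) (at x)"
    using leb[of gd] gd_integrable by blast
  then have "\<exists>N. negligible N \<and> (\<forall>x a. x \<notin> N \<longrightarrow> a < x \<longrightarrow>
    ((\<lambda>y. integral {a..y} gd) has_real_derivative gd x) (at x))" by blast
  from someI_ex[OF this] show "negligible N0" "\<And>x a. x \<notin> N0 \<Longrightarrow> a < x \<Longrightarrow>
    ((\<lambda>y. integral {a..y} gd) has_real_derivative gd x) (at x)"
    unfolding N0_def by blast+
qed

lemma F_deriv: "x \<notin> N0 \<Longrightarrow> (F has_real_derivative gd x) (at x)"
proof -
  assume x: "x \<notin> N0"
  have d: "((\<lambda>y. F (x - 1) + integral {x - 1..y} gd) has_real_derivative 0 + gd x) (at x)"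
    by (intro DERIV_add DERIV_const N0_props(2)[OF x]) simp
  show ?thesis
  proof (rule has_field_derivative_transform_within_open[OF _ _ _ ])
    show "((\<lambda>y. F (x - 1) + integral {x - 1..y} gd) has_real_derivative gd x) (at x)" using d by simp
    show "open {x - 1<..}" by simp
    show "x \<in> {x - 1<..}" by simp
    fix y assume "y \<in> {x - 1<..}"
    then have "(gd has_integral (F y - F (x - 1))) {x - 1..y}" by (intro gd_int) simp
    then show "F (x - 1) + integral {x - 1..y} gd = F y" by (simp add: integral_unique)
  qed
qed

lemma R_eq: "Rfun F = (\<lambda>y. - ln (1 - F y))"
  by (simp add: Rfun_def fun_eq_iff)

lemma R_deriv: "x \<in> I \<Longrightarrow> x \<notin> N0 \<Longrightarrow> (Rfun F has_real_derivative gd x / (1 - F x)) (at x)"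
proof -
  assume x: "x \<in> I" "x \<notin> N0"
  have p: "1 - F x > 0" using F_lt1[OF x(1)] by simp
  have "((\<lambda>y. ln (1 - F y)) has_real_derivative (1 / (1 - F x)) * (0 - gd x)) (at x)"
    by (rule DERIV_chain2[OF DERIV_ln_divide[OF p] DERIV_diff[OF DERIV_const F_deriv[OF x(2)]]])
  then have "((\<lambda>y. - ln (1 - F y)) has_real_derivative - ((1 / (1 - F x)) * (0 - gd x))) (at x)"
    by (rule DERIV_minus)
  then show ?thesis by (simp add: R_eq)
qed

lemma R_cont: "x \<in> I \<Longrightarrow> isCont (Rfun F) x"
proof -
  assume x: "x \<in> I"
  have p: "1 - F x > 0" using F_lt1[OF x] by simp
  have "isCont (\<lambda>y. - ln (1 - F y)) x"
    by (intro continuous_intros F_cont) (use p in simp)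
  then show ?thesis by (simp add: R_eq)
qed


definition gu where "gu u t = H k t * (Rfun F t - Rfun F u) ^ (k - 1) * deriv (Rfun F) t"

lemma Icc_sub_I: "u \<in> I \<Longrightarrow> b \<in> I \<Longrightarrow> {u..b} \<subseteq> I"
proof
  fix t assume u: "u \<in> I" and b: "b \<in> I" and t: "t \<in> {u..b}"
  have "l < t" using u t by (auto simp: I_eq)
  moreover have tb: "ereal t \<le> ereal b" using t by simp
  have "ereal b < rF F" using b by simp
  then have "ereal t < rF F" by (rule le_less_trans[OF tb])
  ultimately show "t \<in> I" by (simp add: I_eq)
qed

lemma gu_integrable:
  assumes u: "u \<in> I" and b: "b \<in> I"
  shows "gu u integrable_on {u..b}"
proof -
  have sub: "{u..b} \<subseteq> I" by (rule Icc_sub_I[OF u b])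
  define \<phi> where "\<phi> t = H k t * (Rfun F t - Rfun F u) ^ (k - 1) / (1 - F t)" for t
  have cR: "continuous_on {u..b} (Rfun F)"
    using sub R_cont by (auto intro!: continuous_at_imp_continuous_on)
  have cF: "continuous_on {u..b} F"
    using F_cont by (auto intro!: continuous_at_imp_continuous_on)
  have cH: "continuous_on {u..b} (H k)"
    using continuous_on_subset[OF hkc sub] by simp
  have nz1: "\<forall>t\<in>{u..b}. 1 - F t \<noteq> 0" using sub F_lt1 by force
  have c\<phi>: "continuous_on {u..b} \<phi>"
    unfolding \<phi>_def by (intro continuous_intros cH cR cF nz1)
  have m: "\<phi> \<in> borel_measurable (lebesgue_on {u..b})"
    by (rule continuous_imp_measurable_on_sets_lebesgue[OF c\<phi>]) simp
  have bd: "bounded (\<phi> ` {u..b})"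
    by (rule compact_imp_bounded[OF compact_continuous_image[OF c\<phi> compact_Icc]])
  have ga: "gd absolutely_integrable_on {u..b}"
    by (rule nonnegative_absolutely_integrable_1[OF gd_integrable]) (simp add: gd_nonneg)
  have "(\<lambda>t. \<phi> t * gd t) absolutely_integrable_on {u..b}"
    by (rule absolutely_integrable_bounded_measurable_product_real[OF m _ bd ga]) simp
  then have i: "(\<lambda>t. \<phi> t * gd t) integrable_on {u..b}"
    by (simp add: absolutely_integrable_on_def)
  show ?thesis
  proof (rule integrable_spike[OF i N0_props(1)])
    fix t assume t: "t \<in> {u..b} - N0"
    then have tI: "t \<in> I" using sub by auto
    have "deriv (Rfun F) t = gd t / (1 - F t)"
      using R_deriv[OF tI] t by (auto intro: DERIV_imp_deriv)
    then show "gu u t = \<phi> t * gd t" by (simp add: gu_def \<phi>_def)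
  qed
qed


lemma Gu_deriv_ex:
  assumes u: "u \<in> I" and b: "b \<in> I"
  shows "\<exists>N. negligible N \<and> (\<forall>v \<in> {u<..<b} - N.
            ((\<lambda>y. integral {u..y} (gu u)) has_real_derivative gu u v) (at v))"
proof -
  define g where "g t = (if t \<in> {u..b} then gu u t else 0)" for t
  have "g integrable_on {u..b}"
    by (rule integrable_eq[OF gu_integrable[OF u b]]) (simp add: g_def)
  then have gU: "g integrable_on UNIV"
    by (rule integrable_on_superset) (auto simp: g_def)
  have gi: "\<And>a c. g integrable_on {a..c}"
    by (rule integrable_on_subinterval[OF gU]) simp
  obtain N where N: "negligible N" "\<And>x a. x \<notin> N \<Longrightarrow> a < x \<Longrightarrow>
      ((\<lambda>y. integral {a..y} g) has_real_derivative g x) (at x)"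
    using leb[OF gi] by blast
  have "\<forall>v \<in> {u<..<b} - N. ((\<lambda>y. integral {u..y} (gu u)) has_real_derivative gu u v) (at v)"
  proof
    fix v assume v: "v \<in> {u<..<b} - N"
    have d: "((\<lambda>y. integral {u..y} g) has_real_derivative g v) (at v)"
      using N(2)[of v u] v by auto
    have "g v = gu u v" using v by (simp add: g_def)
    show "((\<lambda>y. integral {u..y} (gu u)) has_real_derivative gu u v) (at v)"
    proof (rule has_field_derivative_transform_within_open[OF _ open_greaterThanLessThan[of u b]])
      show "((\<lambda>y. integral {u..y} g) has_real_derivative gu u v) (at v)"
        using d \<open>g v = gu u v\<close> by simp
      show "v \<in> {u<..<b}" using v by simp
      fix y assume "y \<in> {u<..<b}"
      then show "integral {u..y} g = integral {u..y} (gu u)"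
        by (intro integral_cong) (auto simp: g_def)
    qed
  qed
  then show ?thesis using N(1) by blast
qed


lemma Gu_ident:
  assumes EQ: "\<forall>u v. lF F < ereal u \<and> u < v \<and> ereal v < rF F \<longrightarrow>
            rec_cond_exp F (H k) k 1 u v = real k * Mj h (k - 1) u v"
    and u: "u \<in> I" and v: "v \<in> I" and uv: "u < v" and Rne: "Rfun F u \<noteq> Rfun F v"
  shows "integral {u..v} (gu u) = (Rfun F v - Rfun F u) ^ k * Mj h (k - 1) u v"
proof -
  define \<Delta> where "\<Delta> = Rfun F v - Rfun F u"
  have D0: "\<Delta> \<noteq> 0" using Rne by (simp add: \<Delta>_def)
  have fk': "(fact k :: real) = real k * fact (k - 1)"
    using k1 by (cases k) auto
  have pk: "\<Delta> ^ k = \<Delta> ^ (k - 1) * \<Delta>" using k1 by (cases k) auto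
  have dens: "H k t * rec_cond_density F k 1 u v t = real k / \<Delta> ^ k * gu u t" for t
  proof -
    have "rec_cond_density F k 1 u v t = fact (k + 1 - 1) / (fact (k - 1) * fact (1 - 1))
          * ((Rfun F t - Rfun F u) / \<Delta>) ^ (k - 1) * (deriv (Rfun F) t / \<Delta>)"
      unfolding rec_cond_density_def \<Delta>_def by simp
    also have "\<dots> = real k * ((Rfun F t - Rfun F u) ^ (k - 1) / \<Delta> ^ (k - 1)) * (deriv (Rfun F) t / \<Delta>)"
      using fk' by (simp add: power_divide)
    also have "\<dots> = real k / \<Delta> ^ k * ((Rfun F t - Rfun F u) ^ (k - 1) * deriv (Rfun F) t)"
      unfolding pk using D0 by (simp add: field_simps)
    finally show ?thesis by (simp add: gu_def mult_ac)
  qed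
  have "rec_cond_exp F (H k) k 1 u v = real k / \<Delta> ^ k * integral {u..v} (gu u)"
    unfolding rec_cond_exp_def dens by simp
  moreover have "rec_cond_exp F (H k) k 1 u v = real k * Mj h (k - 1) u v"
    using EQ u v uv by simp
  ultimately have "real k / \<Delta> ^ k * integral {u..v} (gu u) = real k * Mj h (k - 1) u v" by simp
  then show ?thesis using k1 D0 unfolding \<Delta>_def[symmetric] by (simp add: field_simps)
qed


lemma alg_key:
  fixes A \<rho> d mk m1 D kk :: real
  assumes "A * \<rho> * (d * mk + kk * m1) = kk * (\<rho> * A) * m1 + mk * (A * D)"
    and "A \<noteq> 0" "mk \<noteq> 0" "d \<noteq> 0"
  shows "\<rho> = D / d"
proof -
  from assms(1) have "A * mk * (\<rho> * d) = A * mk * D" by (simp add: algebra_simps)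
  then have "\<rho> * d = D" using assms(2,3) by simp
  then show ?thesis using assms(4) by (simp add: field_simps)
qed

lemma ode_point:
  assumes EQ: "\<forall>u v. lF F < ereal u \<and> u < v \<and> ereal v < rF F \<longrightarrow>
            rec_cond_exp F (H k) k 1 u v = real k * Mj h (k - 1) u v"
    and p: "p \<in> I" and q: "q \<in> I" and pv: "p < v" and vq: "v < q" and vN: "v \<notin> N0"
    and Gd: "((\<lambda>y. integral {p..y} (gu p)) has_real_derivative gu p v) (at v)"
    and Rlt: "Rfun F p < Rfun F v" and Mk: "Mj h k p v \<noteq> 0"
  shows "deriv (Rfun F) v = (Rfun F v - Rfun F p) / (v - p)"
proof -
  have "v \<in> {p..q}" using pv vq by simp
  then have vI: "v \<in> I" by (rule subsetD[OF Icc_sub_I[OF p q]])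
  define \<rho> where "\<rho> = gd v / (1 - F v)"
  have Rd: "(Rfun F has_real_derivative \<rho>) (at v)" unfolding \<rho>_def by (rule R_deriv[OF vI vN])
  then have dRv: "deriv (Rfun F) v = \<rho>" by (rule DERIV_imp_deriv)
  have lp: "l \<le> p" using p by (simp add: I_eq)
  have "(Rfun F \<longlongrightarrow> Rfun F v) (at v)" using R_cont[OF vI] by (simp add: isCont_def)
  then have "\<forall>\<^sub>F y in at v. Rfun F y > Rfun F p" using Rlt by (rule order_tendstoD)
  then obtain d where d: "d > 0" "\<And>y. y \<noteq> v \<Longrightarrow> dist y v < d \<Longrightarrow> Rfun F y > Rfun F p"
    unfolding eventually_at by blast
  define U where "U = {max p (v - d) <..< min q (v + d)}"
  have oU: "open U" by (simp add: U_def)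
  have vU: "v \<in> U" using d pv vq by (simp add: U_def)
  have UR: "Rfun F y > Rfun F p" if "y \<in> U" for y
  proof (cases "y = v")
    case True then show ?thesis using Rlt by simp
  next
    case False
    have "dist y v < d" using that by (auto simp: U_def dist_real_def)
    then show ?thesis using d(2)[OF False] by simp
  qed
  have UI: "y \<in> I" "p < y" if "y \<in> U" for y
  proof -
    have "y \<in> {p..q}" using that by (auto simp: U_def)
    then show "y \<in> I" by (rule subsetD[OF Icc_sub_I[OF p q]])
    show "p < y" using that by (auto simp: U_def)
  qed
  define S where "S = {x. p < x \<and> ereal x < rF F}"
  have SI: "S \<subseteq> I" using lp by (auto simp: S_def I_eq)
  have "S = I \<inter> {p<..}" using lp by (auto simp: S_def I_eq)
  then have oS: "open S" using open_I by (simp add: open_Int)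
  have Su: "\<forall>w\<in>S. p < w" by (simp add: S_def)
  have vS: "v \<in> S" using vI pv by (simp add: S_def I_eq)
  have km: "k = Suc (k - 1)" using k1 by simp
  have dm: "(mseq H p (k - 1) has_real_derivative mseq H p k v) (at v)"
    using mseq_deriv[OF hd_sub[OF SI] Su, of "k - 1" v] vS k1 km by simp
  have dpow: "((\<lambda>y. (Rfun F y - Rfun F p) ^ k) has_real_derivative
      real k * ((\<rho> - 0) * (Rfun F v - Rfun F p) ^ (k - Suc 0))) (at v)"
    by (rule DERIV_power[OF DERIV_diff[OF Rd DERIV_const]])
  have dPhi: "((\<lambda>y. (Rfun F y - Rfun F p) ^ k * mseq H p (k - 1) y) has_real_derivative
      real k * ((\<rho> - 0) * (Rfun F v - Rfun F p) ^ (k - Suc 0)) * mseq H p (k - 1) v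
      + mseq H p k v * (Rfun F v - Rfun F p) ^ k) (at v)"
    by (rule DERIV_mult[OF dpow dm])
  have dG: "((\<lambda>y. integral {p..y} (gu p)) has_real_derivative
      real k * ((\<rho> - 0) * (Rfun F v - Rfun F p) ^ (k - Suc 0)) * mseq H p (k - 1) v
      + mseq H p k v * (Rfun F v - Rfun F p) ^ k) (at v)"
  proof (rule has_field_derivative_transform_within_open[OF dPhi oU vU])
    fix y assume y: "y \<in> U"
    have "integral {p..y} (gu p) = (Rfun F y - Rfun F p) ^ k * Mj h (k - 1) p y"
      by (rule Gu_ident[OF EQ p UI(1)[OF y] UI(2)[OF y]]) (use UR[OF y] in simp)
    also have "Mj h (k - 1) p y = mseq H p (k - 1) y"
      by (rule Mj_eq_I[OF lp UI(2)[OF y]]) (use UI(1)[OF y] in auto)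
    finally show "(Rfun F y - Rfun F p) ^ k * mseq H p (k - 1) y = integral {p..y} (gu p)" by simp
  qed
  have eq: "gu p v = real k * ((\<rho> - 0) * (Rfun F v - Rfun F p) ^ (k - Suc 0)) * mseq H p (k - 1) v
      + mseq H p k v * (Rfun F v - Rfun F p) ^ k"
    by (rule DERIV_unique[OF Gd dG])
  have mk: "mseq H p k v = (H k v - real k * mseq H p (k - 1) v) / (v - p)"
    using k1 by (cases k) auto
  then have Hk: "H k v = (v - p) * mseq H p k v + real k * mseq H p (k - 1) v"
    using pv by (simp add: field_simps)
  have Mk': "mseq H p k v \<noteq> 0" using Mk Mj_eq_I[OF lp pv, of k] vI by (simp add: I_eq)
  have pk: "(Rfun F v - Rfun F p) ^ k = (Rfun F v - Rfun F p) ^ (k - 1) * (Rfun F v - Rfun F p)"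
    using k1 by (cases k) auto
  have "(Rfun F v - Rfun F p) ^ (k - 1) * \<rho> * ((v - p) * mseq H p k v + real k * mseq H p (k - 1) v)
      = real k * (\<rho> * (Rfun F v - Rfun F p) ^ (k - 1)) * mseq H p (k - 1) v
        + mseq H p k v * ((Rfun F v - Rfun F p) ^ (k - 1) * (Rfun F v - Rfun F p))"
    using eq unfolding gu_def dRv Hk pk by (simp add: mult_ac)
  from alg_key[OF this] Rlt Mk' pv have "\<rho> = (Rfun F v - Rfun F p) / (v - p)" by simp
  then show ?thesis using dRv by simp
qed


lemma R_l: "Rfun F l = 0" using F_l by (simp add: Rfun_def)

lemma R_pos: "v \<in> I \<Longrightarrow> Rfun F v > 0"
proof -
  assume v: "v \<in> I"
  have "0 < F v" "F v < 1" using F_pos[of v] F_lt1[OF v] v by (auto simp: I_eq)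
  then have "ln (1 - F v) < 0" by simp
  then show ?thesis by (simp add: Rfun_def)
qed

lemma R_lim_l: "(Rfun F \<longlongrightarrow> 0) (at_right l)"
proof -
  have "isCont (\<lambda>y. - ln (1 - F y)) l"
    by (intro continuous_intros F_cont) (simp add: F_l)
  then have "((\<lambda>y. - ln (1 - F y)) \<longlongrightarrow> - ln (1 - F l)) (at_right l)"
    by (simp add: isCont_def filterlim_at_split)
  then show ?thesis by (simp add: F_l R_eq)
qed

lemma h_lim_l:
  assumes v: "v \<in> I"
  shows "(H 0 \<longlongrightarrow> H 0 l) (at_right l)"
proof -
  have lv: "l < v" using v by (simp add: I_eq)
  have lC: "l \<in> {x. lF F \<le> ereal x \<and> ereal x \<le> rF F}"
  proof -
    have "ereal l < ereal v" using lv by simp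
    also have "\<dots> < rF F" using v by simp
    finally have "ereal l \<le> rF F" by (rule order.strict_implies_order)
    then show ?thesis using lF_eq by simp
  qed
  have "(h \<longlongrightarrow> h l) (at l within {x. lF F \<le> ereal x \<and> ereal x \<le> rF F})"
    using hc lC by (simp add: continuous_on_def)
  moreover have "{l..v} \<subseteq> {x. lF F \<le> ereal x \<and> ereal x \<le> rF F}"
  proof
    fix x assume x: "x \<in> {l..v}"
    have "ereal x \<le> ereal v" using x by simp
    moreover have "ereal v < rF F" using v by simp
    ultimately have "ereal x < rF F" by (rule le_less_trans)
    then have "ereal x \<le> rF F" by (rule order.strict_implies_order)
    then show "x \<in> {x. lF F \<le> ereal x \<and> ereal x \<le> rF F}" using x lF_eq by simp
  qed
  ultimately have "(h \<longlongrightarrow> h l) (at l within {l..v})" by (rule tendsto_within_subset)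
  then show ?thesis using lv by (simp add: at_within_Icc_at_right)
qed

lemma ode_ae:
  assumes EQ: "\<forall>u v. lF F < ereal u \<and> u < v \<and> ereal v < rF F \<longrightarrow>
            rec_cond_exp F (H k) k 1 u v = real k * Mj h (k - 1) u v"
  shows "\<exists>N. negligible N \<and> (\<forall>v \<in> I - N. deriv (Rfun F) v = Rfun F v / (v - l))"
proof -
  let ?P = "\<lambda>pq N. fst pq \<in> I \<and> snd pq \<in> I \<longrightarrow> negligible N \<and> (\<forall>v \<in> {fst pq<..<snd pq} - N.
            ((\<lambda>y. integral {fst pq..y} (gu (fst pq))) has_real_derivative gu (fst pq) v) (at v))"
  have "\<forall>pq. \<exists>N. ?P pq N"
  proof
    fix pq :: "real \<times> real"
    show "\<exists>N. ?P pq N"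
    proof (cases "fst pq \<in> I \<and> snd pq \<in> I")
      case True
      from Gu_deriv_ex[OF conjunct1[OF True] conjunct2[OF True]]
      obtain N where "negligible N \<and> (\<forall>v \<in> {fst pq<..<snd pq} - N.
            ((\<lambda>y. integral {fst pq..y} (gu (fst pq))) has_real_derivative gu (fst pq) v) (at v))"
        by (elim exE)
      then show ?thesis by (intro exI[of _ N]) (rule impI)
    next
      case False
      then show ?thesis by (intro exI[of _ "{}"]) (rule impI, erule notE)
    qed
  qed
  from choice[OF this] obtain NN where NN0: "\<forall>pq. ?P pq (NN pq)" by (elim exE)
  have NN: "?P pq (NN pq)" for pq using NN0 by (rule spec)
  define Q where "Q = {pq \<in> \<rat> \<times> \<rat>. fst pq \<in> I \<and> snd pq \<in> I}"
  define N where "N = N0 \<union> \<Union> (NN ` Q)"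
  have cQ: "countable Q"
    by (rule countable_subset[of _ "\<rat> \<times> \<rat>"]) (auto simp: Q_def countable_rat)
  have "negligible (\<Union> (NN ` Q))"
  proof (rule negligible_countable_Union)
    show "countable (NN ` Q)" using cQ by simp
    fix S assume "S \<in> NN ` Q"
    then obtain pq where "pq \<in> Q" "S = NN pq" by blast
    then show "negligible S" using NN[of pq] unfolding Q_def by blast
  qed
  then have negN: "negligible N" unfolding N_def using N0_props(1) by (rule negligible_Un[rotated])
  have "\<forall>v \<in> I - N. deriv (Rfun F) v = Rfun F v / (v - l)"
  proof
    fix v assume v: "v \<in> I - N"
    have vI: "v \<in> I" using v by blast
    have vN0: "v \<notin> N0" using v unfolding N_def by blast
    have vrF: "ereal v < rF F" using vI by simp
    have lv: "l < v" using vI by (simp add: I_eq)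
    obtain w where w: "ereal v < ereal w" "ereal w < rF F" using ereal_dense2[OF vrF] by blast
    have "v < w" using w(1) by simp
    then obtain q where q: "q \<in> \<rat>" "v < q" "q < w" using Rats_dense_in_real[of v w] by blast
    have qI: "q \<in> I"
    proof -
      have "ereal q < ereal w" using q by simp
      then have "ereal q < rF F" using w(2) by (rule less_trans)
      moreover have "l < q" using q lv by simp
      ultimately show ?thesis using lF_eq by simp
    qed
    define \<phi> where "\<phi> p = (Rfun F v - Rfun F p) / (v - p)" for p
    have t\<phi>: "(\<phi> \<longlongrightarrow> (Rfun F v - 0) / (v - l)) (at_right l)"
      unfolding \<phi>_def using lv by (intro tendsto_intros R_lim_l) auto
    have tM: "((\<lambda>p. mseq H p k v) \<longlongrightarrow> mseq H l k v) (at_right l)"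
      by (rule mseq_cont_u[where H=H, OF h_lim_l[OF vI]]) (use lv in simp)
    have "Mj h k l v \<noteq> 0" using nz vI lF_eq by simp
    then have Ml: "mseq H l k v \<noteq> 0"
      using Mj_eq_I[OF order.refl lv vrF order.refl] by simp
    have eM: "\<forall>\<^sub>F p in at_right l. mseq H p k v \<noteq> 0"
      using tM Ml by (rule tendsto_imp_eventually_ne)
    have eR: "\<forall>\<^sub>F p in at_right l. Rfun F p < Rfun F v"
      using R_lim_l R_pos[OF vI] by (rule order_tendstoD)
    have "deriv (Rfun F) v = Rfun F v / (v - l)"
    proof (rule ccontr)
      assume ne: "deriv (Rfun F) v \<noteq> Rfun F v / (v - l)"
      define e where "e = \<bar>deriv (Rfun F) v - Rfun F v / (v - l)\<bar>"
      have e: "e > 0" using ne by (simp add: e_def)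
      have e\<phi>: "\<forall>\<^sub>F p in at_right l. dist (\<phi> p) (Rfun F v / (v - l)) < e"
        using t\<phi> e by (simp add: tendsto_iff)
      have "\<forall>\<^sub>F p in at_right l. mseq H p k v \<noteq> 0 \<and> Rfun F p < Rfun F v \<and>
          dist (\<phi> p) (Rfun F v / (v - l)) < e"
        using eM eR e\<phi> by eventually_elim simp
      then obtain b where b: "b > l" "\<And>p. l < p \<Longrightarrow> p < b \<Longrightarrow> mseq H p k v \<noteq> 0 \<and> Rfun F p < Rfun F v \<and>
          dist (\<phi> p) (Rfun F v / (v - l)) < e"
        unfolding eventually_at_right_field by blast
      have "l < min b v" using b(1) lv by simp
      then obtain p where p: "p \<in> \<rat>" "l < p" "p < min b v"
        using Rats_dense_in_real[of l "min b v"] by blast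
      have pv: "p < v" using p by simp
      have pI: "p \<in> I"
      proof -
        have "ereal p < ereal v" using pv by simp
        then have "ereal p < rF F" using vrF by (rule less_trans)
        moreover have "l < p" using p by simp
        ultimately show ?thesis using lF_eq by simp
      qed
      have "p < b" using p by simp
      then have props: "mseq H p k v \<noteq> 0" "Rfun F p < Rfun F v" "dist (\<phi> p) (Rfun F v / (v - l)) < e"
        using b(2)[OF p(2)] by blast+
      have pqQ: "(p, q) \<in> Q" using p(1) q(1) pI qI unfolding Q_def by simp
      then have "v \<notin> NN (p, q)" using v unfolding N_def by blast
      moreover have "v \<in> {p<..<q}" using pv q(2) by simp
      ultimately have "v \<in> {fst (p, q)<..<snd (p, q)} - NN (p, q)" by simp
      moreover have "fst (p, q) \<in> I \<and> snd (p, q) \<in> I" using pI qI by simp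
      ultimately have Gd: "((\<lambda>y. integral {p..y} (gu p)) has_real_derivative gu p v) (at v)"
        using NN[of "(p, q)"] by simp
      have lp: "l \<le> p" using p by simp
      have Mk: "Mj h k p v \<noteq> 0"
        using props(1) Mj_eq_I[OF lp pv vrF order.refl] by simp
      have "deriv (Rfun F) v = \<phi> p"
        unfolding \<phi>_def by (rule ode_point[OF EQ pI qI pv q(2) vN0 Gd props(2) Mk])
      then show False using props(3) by (simp add: e_def dist_real_def)
    qed
    then show "deriv (Rfun F) v = Rfun F v / (v - l)" .
  qed
  then show ?thesis using negN by blast
qed


lemma R_deriv_gen: "x \<in> I \<Longrightarrow> (F has_real_derivative D) (at x) \<Longrightarrow> (Rfun F has_real_derivative D / (1 - F x)) (at x)"
proof -
  assume x: "x \<in> I" and d: "(F has_real_derivative D) (at x)"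
  have p: "1 - F x > 0" using F_lt1[OF x] by simp
  have "((\<lambda>y. ln (1 - F y)) has_real_derivative (1 / (1 - F x)) * (0 - D)) (at x)"
    by (rule DERIV_chain2[OF DERIV_ln_divide[OF p] DERIV_diff[OF DERIV_const d]])
  then have "((\<lambda>y. - ln (1 - F y)) has_real_derivative - ((1 / (1 - F x)) * (0 - D))) (at x)"
    by (rule DERIV_minus)
  then show ?thesis by (simp add: R_eq)
qed

lemma I_nonempty: "\<exists>w. w \<in> I"
proof -
  obtain x0 x1 where x: "x0 < x1" "lF F \<le> ereal x0" "ereal x1 \<le> rF F"
    using lF_lt_rF[OF RD AC] by blast
  define v where "v = (x0 + x1) / 2"
  have a: "ereal x0 < ereal v" "ereal v < ereal x1" using x by (auto simp: v_def)
  have b: "lF F < ereal v" using x(2) a(1) by (rule le_less_trans)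
  have c: "ereal v < rF F" using a(2) x(3) by (rule less_le_trans)
  show ?thesis using b c by blast
qed

lemma fwd_dir:
  assumes EQ: "\<forall>u v. lF F < ereal u \<and> u < v \<and> ereal v < rF F \<longrightarrow>
            rec_cond_exp F (H k) k 1 u v = real k * Mj h (k - 1) u v"
  shows "lF F > -\<infinity> \<and> rF F = \<infinity> \<and> (\<exists>c>0. \<forall>x. ereal x \<ge> lF F \<longrightarrow> F x = 1 - exp (- c * (x - l)))"
proof -
  obtain N where N: "negligible N" "\<And>v. v \<in> I - N \<Longrightarrow> deriv (Rfun F) v = Rfun F v / (v - l)"
    using ode_ae[OF EQ] by blast
  define N' where "N' = N \<union> N0"
  have negN': "negligible N'" unfolding N'_def using N(1) N0_props(1) by (rule negligible_Un)
  define \<psi> where "\<psi> t = (1 - F t) * (Rfun F t / (t - l))" for t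
  have gd_eq: "gd t = \<psi> t" if "t \<in> I - N'" for t
  proof -
    have tI: "t \<in> I" and tN: "t \<notin> N" and tN0: "t \<notin> N0" using that by (auto simp: N'_def)
    have "deriv (Rfun F) t = gd t / (1 - F t)"
      by (rule DERIV_imp_deriv[OF R_deriv[OF tI tN0]])
    moreover have "deriv (Rfun F) t = Rfun F t / (t - l)" using N(2) tI tN by blast
    ultimately have "gd t / (1 - F t) = Rfun F t / (t - l)" by simp
    moreover have "1 - F t \<noteq> 0" using F_lt1[OF tI] by simp
    ultimately show ?thesis by (simp add: \<psi>_def field_simps)
  qed
  have cont\<psi>: "continuous_on S \<psi>" if "S \<subseteq> I" for S
  proof -
    have cR: "continuous_on S (Rfun F)"
      using that R_cont by (auto intro!: continuous_at_imp_continuous_on)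
    have cF: "continuous_on S F"
      using F_cont by (auto intro!: continuous_at_imp_continuous_on)
    have nz: "\<forall>t\<in>S. t - l \<noteq> 0" using that by (force simp: I_eq)
    show ?thesis unfolding \<psi>_def by (intro continuous_intros cR cF nz)
  qed
  have Fd: "(F has_real_derivative \<psi> v) (at v)" if vI: "v \<in> I" for v
  proof -
    have lv: "l < v" using vI by (simp add: I_eq)
    have vrF: "ereal v < rF F" using vI by simp
    define a where "a = (l + v) / 2"
    have aI: "a \<in> I"
    proof -
      have "ereal a < ereal v" using lv by (simp add: a_def)
      then have "ereal a < rF F" using vrF by (rule less_trans)
      moreover have "l < a" using lv by (simp add: a_def)
      ultimately show ?thesis using lF_eq by simp
    qed
    have av: "a < v" using lv by (simp add: a_def)
    obtain w where w: "ereal v < ereal w" "ereal w < rF F" using ereal_dense2[OF vrF] by blast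
    have vw: "v < w" using w(1) by simp
    have wI: "w \<in> I" using w(2) lv vw lF_eq by simp
    have sub: "{a..w} \<subseteq> I" by (rule Icc_sub_I[OF aI wI])
    have ig: "integral {a..y} \<psi> = F y - F a" if "y \<in> {a..w}" for y
    proof -
      have "(gd has_integral (F y - F a)) {a..y}" using that by (intro gd_int) simp
      then have "(\<psi> has_integral (F y - F a)) {a..y}"
      proof (rule has_integral_spike[OF negN', rotated])
        fix t assume t: "t \<in> {a..y} - N'"
        then have "t \<in> {a..w}" using that by auto
        then have "t \<in> I" by (rule subsetD[OF sub])
        then have "t \<in> I - N'" using t by blast
        then show "\<psi> t = gd t" using gd_eq by simp
      qed
      then show ?thesis by (rule integral_unique)
    qed
    have "((\<lambda>x. integral {a..x} \<psi>) has_real_derivative \<psi> v) (at v within {a..w})"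
      by (rule integral_has_real_derivative[OF cont\<psi>[OF sub]]) (use av vw in simp)
    moreover have "at v within {a..w} = at v"
      by (rule at_within_interior) (use av vw in simp)
    ultimately have d1: "((\<lambda>x. integral {a..x} \<psi>) has_real_derivative \<psi> v) (at v)" by simp
    have d2: "((\<lambda>x. F a + integral {a..x} \<psi>) has_real_derivative 0 + \<psi> v) (at v)"
      by (rule DERIV_add[OF DERIV_const d1])
    show ?thesis
    proof (rule has_field_derivative_transform_within_open[OF _ open_greaterThanLessThan[of a w]])
      show "((\<lambda>x. F a + integral {a..x} \<psi>) has_real_derivative \<psi> v) (at v)" using d2 by simp
      show "v \<in> {a<..<w}" using av vw by simp
      fix y assume "y \<in> {a<..<w}"
      then show "F a + integral {a..y} \<psi> = F y" using ig[of y] by simp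
    qed
  qed
  have qd: "((\<lambda>x. Rfun F x / (x - l)) has_real_derivative 0) (at v within I)" if vI: "v \<in> I" for v
  proof -
    have lv: "l < v" using vI by (simp add: I_eq)
    have p: "1 - F v \<noteq> 0" using F_lt1[OF vI] by simp
    have dR: "(Rfun F has_real_derivative Rfun F v / (v - l)) (at v)"
      using R_deriv_gen[OF vI Fd[OF vI]] p by (simp add: \<psi>_def)
    have "((\<lambda>x. Rfun F x / (x - l)) has_real_derivative
        (Rfun F v / (v - l) * (v - l) - Rfun F v * 1) / ((v - l) * (v - l))) (at v)"
      by (rule DERIV_divide[OF dR DERIV_diff[OF DERIV_ident DERIV_const, simplified]]) (use lv in simp)
    then have "((\<lambda>x. Rfun F x / (x - l)) has_real_derivative 0) (at v)" using lv by simp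
    then show ?thesis by (rule has_field_derivative_at_within)
  qed
  obtain c where c: "\<And>x. x \<in> I \<Longrightarrow> Rfun F x / (x - l) = c"
    using has_field_derivative_zero_constant[OF convex_I qd] by blast
  obtain w0 where w0: "w0 \<in> I" using I_nonempty by blast
  have cpos: "c > 0"
  proof -
    have "Rfun F w0 > 0" by (rule R_pos[OF w0])
    moreover have "w0 - l > 0" using w0 by (simp add: I_eq)
    ultimately show ?thesis using c[OF w0] by (metis divide_pos_pos)
  qed
  have Fform: "F x = 1 - exp (- c * (x - l))" if xI: "x \<in> I" for x
  proof -
    have "x - l > 0" using xI by (simp add: I_eq)
    then have "Rfun F x = c * (x - l)" using c[OF xI] by (simp add: field_simps)
    then have "ln (1 - F x) = - c * (x - l)" by (simp add: Rfun_def)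
    moreover have "1 - F x > 0" using F_lt1[OF xI] by simp
    ultimately have "1 - F x = exp (- c * (x - l))" by (metis exp_ln)
    then show ?thesis by simp
  qed
  have rinf: "rF F = \<infinity>"
  proof (cases "rF F")
    case MInf
    then show ?thesis using w0 by simp
  next
    case PInf then show ?thesis .
  next
    case (real r)
    have Fr: "F r = 1" by (rule cdf_at_r[OF RD AC real])
    have "l < w0" "w0 < r" using w0 real lF_eq by simp_all
    then have lr: "l < r" by simp
    have "(F \<longlongrightarrow> F r) (at_left r)"
      using F_cont[of r] by (simp add: isCont_def filterlim_at_split)
    moreover have "\<forall>\<^sub>F x in at_left r. F x = 1 - exp (- c * (x - l))"
    proof (rule eventually_mono[OF eventually_at_left_real[where b=l, OF lr]])
      fix x assume "x \<in> {l<..<r}"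
      then have "x \<in> I" using real lF_eq by simp
      then show "F x = 1 - exp (- c * (x - l))" by (rule Fform)
    qed
    ultimately have "((\<lambda>x. 1 - exp (- c * (x - l))) \<longlongrightarrow> F r) (at_left r)"
      by (rule Lim_transform_eventually)
    moreover have "((\<lambda>x. 1 - exp (- c * (x - l))) \<longlongrightarrow> 1 - exp (- c * (r - l))) (at_left r)"
      by (intro tendsto_intros)
    ultimately have "F r = 1 - exp (- c * (r - l))"
      using tendsto_unique[OF trivial_limit_at_left_real] by blast
    then have "exp (- c * (r - l)) = 0" using Fr by simp
    then show ?thesis by simp
  qed
  have "\<forall>x. ereal x \<ge> lF F \<longrightarrow> F x = 1 - exp (- c * (x - l))"
  proof (intro allI impI)
    fix x assume "ereal x \<ge> lF F"
    then have "l \<le> x" using lF_eq by simp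
    then show "F x = 1 - exp (- c * (x - l))"
    proof (cases "x = l")
      case True then show ?thesis using F_l by simp
    next
      case False
      then have "l < x" using \<open>l \<le> x\<close> by simp
      then have "x \<in> I" using rinf lF_eq by simp
      then show ?thesis by (rule Fform)
    qed
  qed
  then show ?thesis using rinf cpos lF_eq by auto
qed

end


theorem mainTheorem1:
  fixes M :: "real measure" and h :: "real \<Rightarrow> real" and n k :: nat
  assumes "real_distribution M"
    and "absolutely_continuous lborel M"
    and "n \<ge> 2" and "1 \<le> k" and "k \<le> n - 1"
    and "continuous_on {x. lF (cdf M) \<le> ereal x \<and> ereal x \<le> rF (cdf M)} h"
    and "\<forall>j<k. \<forall>x. lF (cdf M) < ereal x \<and> ereal x < rF (cdf M) \<longrightarrow>
            ((deriv ^^ j) h has_real_derivative (deriv ^^ Suc j) h x) (at x)"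
    and "continuous_on {x. lF (cdf M) < ereal x \<and> ereal x < rF (cdf M)} ((deriv ^^ k) h)"
    and "\<forall>v. lF (cdf M) < ereal v \<and> ereal v < rF (cdf M) \<longrightarrow>
            lF (cdf M) \<noteq> -\<infinity> \<and> Mj h k (real_of_ereal (lF (cdf M))) v \<noteq> 0"
  shows "(\<forall>u v. lF (cdf M) < ereal u \<and> u < v \<and> ereal v < rF (cdf M) \<longrightarrow>
            rec_cond_exp (cdf M) ((deriv ^^ k) h) k 1 u v = real k * Mj h (k - 1) u v)
     \<longleftrightarrow> (lF (cdf M) > -\<infinity> \<and> rF (cdf M) = \<infinity> \<and>
          (\<exists>c>0. \<forall>x. ereal x \<ge> lF (cdf M) \<longrightarrow>
              cdf M x = 1 - exp (- c * (x - real_of_ereal (lF (cdf M))))))"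
  proof -
  note RD = assms(1) and AC = assms(2) and hc = assms(6) and hd0 = assms(7) and hkc = assms(8) and nz = assms(9)
  have k1: "1 \<le> k" using assms(4) .
  have lM: "l M = real_of_ereal (lF (cdf M))"
    using lF_eq[OF RD AC k1 hc hd0 hkc nz] by simp
  show ?thesis
  proof
    assume EQ: "\<forall>u v. lF (cdf M) < ereal u \<and> u < v \<and> ereal v < rF (cdf M) \<longrightarrow>
            rec_cond_exp (cdf M) ((deriv ^^ k) h) k 1 u v = real k * Mj h (k - 1) u v"
    have EQ': "\<forall>u v. lF (cdf M) < ereal u \<and> u < v \<and> ereal v < rF (cdf M) \<longrightarrow>
            rec_cond_exp (cdf M) ((\<lambda>j. (deriv ^^ j) h) k) k 1 u v = real k * Mj h (k - 1) u v"
      using EQ by simp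
    from fwd_dir[OF RD AC k1 hc hd0 hkc nz EQ']
    show "lF (cdf M) > -\<infinity> \<and> rF (cdf M) = \<infinity> \<and>
          (\<exists>c>0. \<forall>x. ereal x \<ge> lF (cdf M) \<longrightarrow>
              cdf M x = 1 - exp (- c * (x - real_of_ereal (lF (cdf M)))))"
      by (simp only: lM)
  next
    assume A: "lF (cdf M) > -\<infinity> \<and> rF (cdf M) = \<infinity> \<and>
          (\<exists>c>0. \<forall>x. ereal x \<ge> lF (cdf M) \<longrightarrow>
              cdf M x = 1 - exp (- c * (x - real_of_ereal (lF (cdf M)))))"
    then obtain c where c: "c > 0" and Fe: "\<forall>x. ereal x \<ge> lF (cdf M) \<longrightarrow>
              cdf M x = 1 - exp (- c * (x - real_of_ereal (lF (cdf M))))" by blast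
    have rinf: "rF (cdf M) = \<infinity>" using A by blast
    show "\<forall>u v. lF (cdf M) < ereal u \<and> u < v \<and> ereal v < rF (cdf M) \<longrightarrow>
            rec_cond_exp (cdf M) ((deriv ^^ k) h) k 1 u v = real k * Mj h (k - 1) u v"
    proof (intro allI impI)
      fix u v assume uv: "lF (cdf M) < ereal u \<and> u < v \<and> ereal v < rF (cdf M)"
      have Fe': "\<forall>x. ereal x \<ge> lF (cdf M) \<longrightarrow> cdf M x = 1 - exp (- c * (x - l M))"
        using Fe by (simp only: lM)
      have "rec_cond_exp (cdf M) ((\<lambda>j. (deriv ^^ j) h) k) k 1 u v = real k * Mj h (k - 1) u v"
        by (rule back_dir[OF RD AC k1 hc hd0 hkc nz rinf c Fe']) (use uv in auto)
      then show "rec_cond_exp (cdf M) ((deriv ^^ k) h) k 1 u v = real k * Mj h (k - 1) u v" by simp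
    qed
  qed
qed

end
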